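(* Let $F=(A,R)$ be an abstract argumentation framework and $S\subseteq A$. Then $S$ is an initial set of $F$ if and only if there is a strongly connected component $F'=(A',R')$ of $F$ with $S\subseteq A'$ such that $S$ is an initial set of $F'$ and $S^-\subseteq A'$ (where $S^-$ is computed in $F$).
   Context: An abstract argumentation framework is a pair $F=(A,R)$ with $A$ a finite set and $R\subseteq A\times A$ ($a\to b$ means $(a,b)\in R$). $S^-=\{a\in A\mid \exists b\in S: a\to b\}$. $S$ is admissible if it is conflict-free and every attacker of an element of $S$ is attacked by some element of $S$. An initial set is a non-empty admissible set with no non-empty admissible proper subset. For $X\subseteq A$, $F|_X=(X,R\cap(X\times X))$. A strongly connected component (SCC) of $F$ is a framework $F|_{A'}$ such that there is a directed path in $F|_{A'}$ between any two arguments of $A'$ and $A'$ is maximal with this property. (Every initial set lies inside a single SCC, denoted $\mathrm{SCC}(S)$ in the paper.) *)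

theory Defs
  imports Main
begin

definition AF :: "'a set \<Rightarrow> ('a \<times> 'a) set \<Rightarrow> bool" where
  "AF A R \<longleftrightarrow> finite A \<and> R \<subseteq> A \<times> A"

text \<open>Restriction F|_X = (X, R \<inter> (X \<times> X)); we only need the attack part.\<close>
definition restr :: "('a \<times> 'a) set \<Rightarrow> 'a set \<Rightarrow> ('a \<times> 'a) set" where
  "restr R X = R \<inter> (X \<times> X)"

definition attackers :: "'a set \<Rightarrow> ('a \<times> 'a) set \<Rightarrow> 'a set \<Rightarrow> 'a set" where
  "attackers A R S = {a \<in> A. \<exists>b\<in>S. (a, b) \<in> R}"

definition conflict_free :: "('a \<times> 'a) set \<Rightarrow> 'a set \<Rightarrow> bool" where
  "conflict_free R S \<longleftrightarrow> (\<forall>a\<in>S. \<forall>b\<in>S. (a, b) \<notin> R)"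

definition admissible :: "'a set \<Rightarrow> ('a \<times> 'a) set \<Rightarrow> 'a set \<Rightarrow> bool" where
  "admissible A R S \<longleftrightarrow> S \<subseteq> A \<and> conflict_free R S \<and>
     (\<forall>b\<in>S. \<forall>a\<in>A. (a, b) \<in> R \<longrightarrow> (\<exists>c\<in>S. (c, a) \<in> R))"

definition initial_set :: "'a set \<Rightarrow> ('a \<times> 'a) set \<Rightarrow> 'a set \<Rightarrow> bool" where
  "initial_set A R S \<longleftrightarrow> S \<noteq> {} \<and> admissible A R S \<and>
     (\<forall>T. T \<noteq> {} \<and> T \<subset> S \<longrightarrow> \<not> admissible A R T)"

definition strongly_connected :: "('a \<times> 'a) set \<Rightarrow> 'a set \<Rightarrow> bool" where
  "strongly_connected R X \<longleftrightarrow> (\<forall>x\<in>X. \<forall>y\<in>X. (x, y) \<in> (restr R X)\<^sup>*)"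

definition is_SCC :: "'a set \<Rightarrow> ('a \<times> 'a) set \<Rightarrow> 'a set \<Rightarrow> bool" where
  "is_SCC A R A' \<longleftrightarrow> A' \<noteq> {} \<and> A' \<subseteq> A \<and> strongly_connected R A' \<and>
     (\<forall>X. A' \<subset> X \<and> X \<subseteq> A \<longrightarrow> \<not> strongly_connected R X)"

end

theory Submission
  imports Defs
begin

lemma adm_equiv:
  assumes "A' \<subseteq> A" "S \<subseteq> A'" "attackers A R S \<subseteq> A'" "T \<subseteq> S"
  shows "admissible A R T \<longleftrightarrow> admissible A' (restr R A') T"
proof
  assume h: "admissible A R T"
  show "admissible A' (restr R A') T"
    unfolding admissible_def conflict_free_def
  proof (intro conjI ballI impI)
    show "T \<subseteq> A'" using assms by blast
  next
    fix a b assume "a \<in> T" "b \<in> T" thus "(a, b) \<notin> restr R A'"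
      using h unfolding admissible_def conflict_free_def restr_def by blast
  next
    fix b a assume b: "b \<in> T" and a: "a \<in> A'" and ab: "(a, b) \<in> restr R A'"
    then obtain c where "c \<in> T" "(c, a) \<in> R"
      using h assms(1) unfolding admissible_def restr_def by blast
    thus "\<exists>c\<in>T. (c, a) \<in> restr R A'" using a assms unfolding restr_def by blast
  qed
next
  assume h: "admissible A' (restr R A') T"
  show "admissible A R T"
    unfolding admissible_def conflict_free_def
  proof (intro conjI ballI impI)
    show "T \<subseteq> A" using assms by blast
  next
    fix a b assume "a \<in> T" "b \<in> T" thus "(a, b) \<notin> R"
      using h assms unfolding admissible_def conflict_free_def restr_def by blast
  next
    fix b a assume b: "b \<in> T" and a: "a \<in> A" and ab: "(a, b) \<in> R"
    then have "a \<in> A'" using assms unfolding attackers_def by blast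
    then obtain c where "c \<in> T" "(c, a) \<in> restr R A'"
      using h b ab assms unfolding admissible_def restr_def by blast
    thus "\<exists>c\<in>T. (c, a) \<in> R" unfolding restr_def by blast
  qed
qed

lemma init_equiv:
  assumes "A' \<subseteq> A" "S \<subseteq> A'" "attackers A R S \<subseteq> A'"
  shows "initial_set A R S \<longleftrightarrow> initial_set A' (restr R A') S"
  unfolding initial_set_def using adm_equiv[OF assms] by blast

lemma path_in:
  assumes "(x, y) \<in> R\<^sup>*" "x \<in> C" "y \<in> C"
    and "C = {z \<in> A. (s0, z) \<in> R\<^sup>* \<and> (z, s0) \<in> R\<^sup>*}" "R \<subseteq> A \<times> A"
  shows "(x, y) \<in> (restr R C)\<^sup>*"
  using assms(1,2)
proof (induction rule: converse_rtrancl_induct)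
  case base
  then show ?case by simp
next
  case (step x x')
  have "x' \<in> C"
  proof -
    have "x' \<in> A" using step.hyps(1) assms(5) by blast
    moreover have "(s0, x') \<in> R\<^sup>*" using step.prems assms(4) step.hyps(1) by auto
    moreover have "(x', s0) \<in> R\<^sup>*" using step.hyps(2) assms(3,4) by auto
    ultimately show ?thesis using assms(4) by blast
  qed
  then have "(x, x') \<in> restr R C" using step unfolding restr_def by blast
  then show ?case using step.IH[OF \<open>x' \<in> C\<close>] by (meson converse_rtrancl_into_rtrancl)
qed

theorem proposition2:
  fixes A :: "'a set" and R :: "('a \<times> 'a) set" and S :: "'a set"
  assumes "AF A R" and "S \<subseteq> A"
  shows "initial_set A R S \<longleftrightarrow>
    (\<exists>A'. is_SCC A R A' \<and> S \<subseteq> A' \<and> initial_set A' (restr R A') S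
           \<and> attackers A R S \<subseteq> A')"
proof
  assume "\<exists>A'. is_SCC A R A' \<and> S \<subseteq> A' \<and> initial_set A' (restr R A') S
           \<and> attackers A R S \<subseteq> A'"
  then obtain A' where "is_SCC A R A'" "S \<subseteq> A'" "initial_set A' (restr R A') S"
    "attackers A R S \<subseteq> A'" by blast
  then show "initial_set A R S" using init_equiv[of A' A S R] unfolding is_SCC_def by blast
next
  assume ini: "initial_set A R S"
  have fin: "finite A" and RA: "R \<subseteq> A \<times> A" using assms(1) unfolding AF_def by auto
  define anc where "anc x = {y \<in> A. (y, x) \<in> R\<^sup>*}" for x
  obtain s1 where "s1 \<in> S" using ini unfolding initial_set_def by blast
  obtain s0 where s0: "s0 \<in> S" and s0min: "\<forall>y. y \<in> S \<longrightarrow> card (anc s0) \<le> card (anc y)"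
    using ex_has_least_nat[of "\<lambda>x. x \<in> S" s1 "\<lambda>x. card (anc x)"] \<open>s1 \<in> S\<close> by blast
  have s0A: "s0 \<in> A" using s0 assms(2) by blast
  have minimal: "(s0, s) \<in> R\<^sup>*" if "s \<in> S" "(s, s0) \<in> R\<^sup>*" for s
  proof (rule ccontr)
    assume nr: "(s0, s) \<notin> R\<^sup>*"
    have "anc s \<subseteq> anc s0" using that unfolding anc_def by auto
    moreover have "s0 \<in> anc s0" "s0 \<notin> anc s" using s0A nr unfolding anc_def by auto
    ultimately have "anc s \<subset> anc s0" by blast
    moreover have "finite (anc s0)" using fin unfolding anc_def by auto
    ultimately have "card (anc s) < card (anc s0)" by (simp add: psubset_card_mono)
    thus False using s0min that by force
  qed
  define T where "T = {s \<in> S. (s, s0) \<in> R\<^sup>*}"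
  have "admissible A R T"
    unfolding admissible_def conflict_free_def
  proof (intro conjI ballI impI)
    show "T \<subseteq> A" using assms(2) T_def by blast
  next
    fix a b assume "a \<in> T" "b \<in> T" thus "(a, b) \<notin> R"
      using ini unfolding T_def initial_set_def admissible_def conflict_free_def by blast
  next
    fix b a assume b: "b \<in> T" and a: "a \<in> A" and ab: "(a, b) \<in> R"
    then obtain c where c: "c \<in> S" "(c, a) \<in> R"
      using ini unfolding T_def initial_set_def admissible_def by blast
    have "(b, s0) \<in> R\<^sup>*" using b unfolding T_def by blast
    then have "(a, s0) \<in> R\<^sup>*" using ab by (rule converse_rtrancl_into_rtrancl[rotated])
    then have "(c, s0) \<in> R\<^sup>*" using c(2) by (rule converse_rtrancl_into_rtrancl[rotated])
    thus "\<exists>c\<in>T. (c, a) \<in> R" using c unfolding T_def by blast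
  qed
  moreover have "T \<noteq> {}" using s0 T_def by blast
  moreover have "T \<subseteq> S" using T_def by blast
  ultimately have "T = S" using ini unfolding initial_set_def by blast
  then have Sreach: "\<And>s. s \<in> S \<Longrightarrow> (s, s0) \<in> R\<^sup>* \<and> (s0, s) \<in> R\<^sup>*"
    using minimal T_def by blast
  define C where "C = {z \<in> A. (s0, z) \<in> R\<^sup>* \<and> (z, s0) \<in> R\<^sup>*}"
  have SC: "S \<subseteq> C" using Sreach assms(2) C_def by blast
  have CA: "C \<subseteq> A" using C_def by blast
  have att: "attackers A R S \<subseteq> C"
  proof
    fix a assume "a \<in> attackers A R S"
    then obtain b where a: "a \<in> A" "b \<in> S" "(a, b) \<in> R" unfolding attackers_def by blast
    then obtain c where c: "c \<in> S" "(c, a) \<in> R"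
      using ini unfolding initial_set_def admissible_def by blast
    have "(s0, a) \<in> R\<^sup>*" using Sreach[OF c(1)] c(2) by auto
    moreover have "(a, s0) \<in> R\<^sup>*" using Sreach[OF a(2)] a(3)
      by (meson converse_rtrancl_into_rtrancl)
    ultimately show "a \<in> C" using a C_def by blast
  qed
  have scc: "is_SCC A R C"
    unfolding is_SCC_def
  proof (intro conjI allI impI)
    show "C \<noteq> {}" using SC s0 by blast
    show "C \<subseteq> A" by (rule CA)
    show "strongly_connected R C" unfolding strongly_connected_def
    proof (intro ballI)
      fix x y assume x: "x \<in> C" and y: "y \<in> C"
      have "(x, s0) \<in> R\<^sup>*" "(s0, y) \<in> R\<^sup>*" using x y C_def by auto
      then have "(x, y) \<in> R\<^sup>*" by (rule rtrancl_trans)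
      then show "(x, y) \<in> (restr R C)\<^sup>*" using path_in[OF _ x y C_def RA] by blast
    qed
  next
    fix X assume X: "C \<subset> X \<and> X \<subseteq> A"
    show "\<not> strongly_connected R X"
    proof
      assume sc: "strongly_connected R X"
      obtain x where x: "x \<in> X" "x \<notin> C" using X by blast
      have s0X: "s0 \<in> X" using X SC s0 by blast
      have sub: "restr R X \<subseteq> R" unfolding restr_def by blast
      have "(x, s0) \<in> R\<^sup>*" "(s0, x) \<in> R\<^sup>*"
        using sc x s0X rtrancl_mono[OF sub] unfolding strongly_connected_def by blast+
      thus False using x X C_def by blast
    qed
  qed
  show "\<exists>A'. is_SCC A R A' \<and> S \<subseteq> A' \<and> initial_set A' (restr R A') S
           \<and> attackers A R S \<subseteq> A'"
    using scc SC att init_equiv[OF CA SC att] ini by blast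
qed

end
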